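(* Let $(G_n)$ be a sequence of directed graphs, $G_n$ on vertex set $\{D\}\cup[n]$, in which every participant is reachable from $D$, and let $b_n$ be the maximum out-degree of $G_n$. If $b_n=O((\log n)^{1/2-\epsilon})$ for some $\epsilon>0$, then $\Gamma_{\text{sota}}(G_n)/n\to\infty$ as $n\to\infty$.
   Context: For a directed graph $G$ on $\{D\}\cup[n]$ with dealer $D$ and integer $k\ge 2$, let $\mathcal N(D)$ be the set of out-neighbours of $D$. For a participant $i$ and integer $w\ge k$, let $\ell_w(D\to i)$ be the minimum, over all families of $w$ internally vertex-disjoint directed paths from $D$ to $i$, of the average length (number of edges) of the paths in the family, with $\ell_w(D\to i)=\infty$ if no such family exists. The communication complexity of the state-of-the-art (separate secure transmissions) scheme is $$\Gamma_{\text{sota}}(G)=|\mathcal N(D)|+\sum_{i\notin\mathcal N(D)}\min_{w\ge k}\Big[\frac{w}{w-k+1}\,\ell_w(D\to i)\Big].$$ *)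

theory Defs
  imports "HOL-Analysis.Analysis" "HOL-Library.Landau_Symbols"
begin

text \<open>A directed graph on the vertex set {D} \<union> [n] is encoded as an edge set
  E :: (nat \<times> nat) set with E \<subseteq> {0..n} \<times> {0..n}; the dealer D is vertex 0
  and the participants are 1..n.\<close>

definition dealer :: nat where "dealer = 0"

definition is_digraph :: "nat \<Rightarrow> (nat \<times> nat) set \<Rightarrow> bool" where
  "is_digraph n E \<longleftrightarrow> E \<subseteq> {0..n} \<times> {0..n}"

definition dealer_nbrs :: "nat \<Rightarrow> (nat \<times> nat) set \<Rightarrow> nat set" where
  "dealer_nbrs n E = {v \<in> {1..n}. (dealer, v) \<in> E}"

definition out_deg :: "(nat \<times> nat) set \<Rightarrow> nat \<Rightarrow> nat" where
  "out_deg E u = card {v. (u, v) \<in> E}"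

definition max_out_deg :: "nat \<Rightarrow> (nat \<times> nat) set \<Rightarrow> nat" where
  "max_out_deg n E = Max (out_deg E ` {0..n})"

definition is_dpath :: "(nat \<times> nat) set \<Rightarrow> nat \<Rightarrow> nat \<Rightarrow> nat list \<Rightarrow> bool" where
  "is_dpath E a b p \<longleftrightarrow> p \<noteq> [] \<and> hd p = a \<and> last p = b \<and> distinct p \<and>
     (\<forall>j. Suc j < length p \<longrightarrow> (p ! j, p ! Suc j) \<in> E)"

definition path_len :: "nat list \<Rightarrow> nat" where
  "path_len p = length p - 1"

definition interior :: "nat list \<Rightarrow> nat set" where
  "interior p = set (butlast (tl p))"

definition disjoint_family :: "(nat \<times> nat) set \<Rightarrow> nat \<Rightarrow> nat \<Rightarrow> nat list list \<Rightarrow> bool" where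
  "disjoint_family E i w ps \<longleftrightarrow> length ps = w \<and>
     (\<forall>p \<in> set ps. is_dpath E dealer i p) \<and>
     (\<forall>j < w. \<forall>j' < w. j \<noteq> j' \<longrightarrow> interior (ps ! j) \<inter> interior (ps ! j') = {})"

text \<open>\<ell>_w(D \<rightarrow> i): minimum average length; \<infinity> if no such family (Inf of empty set).\<close>
definition ell :: "(nat \<times> nat) set \<Rightarrow> nat \<Rightarrow> nat \<Rightarrow> ereal" where
  "ell E w i = Inf {ereal ((\<Sum>p\<leftarrow>ps. real (path_len p)) / real w) | ps. disjoint_family E i w ps}"

definition Gamma_sota :: "nat \<Rightarrow> nat \<Rightarrow> (nat \<times> nat) set \<Rightarrow> ereal" where
  "Gamma_sota k n E = ereal (real (card (dealer_nbrs n E))) +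
     (\<Sum>i \<in> {1..n} - dealer_nbrs n E.
        Inf {ereal (real w / real (w - k + 1)) * ell E w i | w. w \<ge> k})"

end

theory Submission
  imports Defs "HOL-Real_Asymp.Real_Asymp"
begin

fun reach :: "(nat \<times> nat) set \<Rightarrow> nat \<Rightarrow> nat set" where
  "reach E 0 = {0}"
| "reach E (Suc d) = reach E d \<union> {v. \<exists>u\<in>reach E d. (u,v) \<in> E}"

lemma reach_sub: "is_digraph n E \<Longrightarrow> reach E d \<subseteq> {0..n}"
  by (induction d) (auto simp: is_digraph_def)

lemma reach_mono: "d \<le> d' \<Longrightarrow> reach E d \<subseteq> reach E d'"
proof (induction d' rule: dec_induct)
  case base then show ?case by simp
next
  case (step m) then show ?case by auto
qed

lemma reach_card:
  assumes "is_digraph n E"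
  shows "card (reach E d) \<le> (max_out_deg n E + 1) ^ d"
proof (induction d)
  case 0 then show ?case by simp
next
  case (Suc d)
  let ?b = "max_out_deg n E"
  have fin: "finite (reach E d)" using reach_sub[OF assms] finite_subset by blast
  have outs: "u \<in> reach E d \<Longrightarrow> card {v. (u,v) \<in> E} \<le> ?b" for u
  proof -
    assume "u \<in> reach E d"
    then have "u \<in> {0..n}" using reach_sub[OF assms] by blast
    then show ?thesis unfolding max_out_deg_def out_deg_def
      by (intro Max_ge) auto
  qed
  have eq: "{v. \<exists>u\<in>reach E d. (u,v) \<in> E} = (\<Union>u\<in>reach E d. {v. (u,v) \<in> E})" by auto
  have "card {v. \<exists>u\<in>reach E d. (u,v) \<in> E} \<le> (\<Sum>u\<in>reach E d. card {v. (u,v) \<in> E})"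
    unfolding eq by (rule card_UN_le[OF fin])
  also have "\<dots> \<le> (\<Sum>u\<in>reach E d. ?b)" by (rule sum_mono) (use outs in auto)
  also have "\<dots> = card (reach E d) * ?b" by simp
  finally have c1: "card {v. \<exists>u\<in>reach E d. (u,v) \<in> E} \<le> card (reach E d) * ?b" .
  have "card (reach E (Suc d)) \<le> card (reach E d) + card {v. \<exists>u\<in>reach E d. (u,v) \<in> E}"
    by (simp add: card_Un_le)
  also have "\<dots> \<le> card (reach E d) * (?b + 1)" using c1 by simp
  also have "\<dots> \<le> (?b + 1) ^ d * (?b + 1)" using Suc by (intro mult_right_mono) auto
  finally show ?case by (simp add: mult.commute)
qed

lemma path_reach:
  assumes "is_dpath E 0 i p"
  shows "i \<in> reach E (path_len p)"
proof -
  have "\<forall>j. j < length p \<longrightarrow> p ! j \<in> reach E j"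
  proof (intro allI)
    fix j show "j < length p \<longrightarrow> p ! j \<in> reach E j"
    proof (induction j)
      case 0 then show ?case using assms unfolding is_dpath_def by (auto simp: hd_conv_nth)
    next
      case (Suc j)
      show ?case
      proof
        assume "Suc j < length p"
        then have "p ! j \<in> reach E j" "(p ! j, p ! Suc j) \<in> E"
          using Suc assms unfolding is_dpath_def by auto
        then show "p ! Suc j \<in> reach E (Suc j)" by auto
      qed
    qed
  qed
  moreover have "p \<noteq> []" "last p = i" using assms unfolding is_dpath_def by auto
  ultimately show ?thesis unfolding path_len_def by (metis last_conv_nth diff_less length_greater_0_conv zero_less_one)
qed

lemma ell_ge:
  assumes "i \<notin> reach E d" "w \<ge> 1"
  shows "ereal (real d) \<le> ell E w i"
  unfolding ell_def
proof (rule Inf_greatest, clarify)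
  fix ps assume fam: "disjoint_family E i w ps"
  have len: "length ps = w" using fam unfolding disjoint_family_def by auto
  have "\<forall>p\<in>set ps. real d \<le> real (path_len p)"
  proof
    fix p assume "p \<in> set ps"
    then have "is_dpath E 0 i p" using fam unfolding disjoint_family_def dealer_def by auto
    then have "i \<in> reach E (path_len p)" by (rule path_reach)
    then have "\<not> path_len p \<le> d" using assms(1) reach_mono by blast
    then show "real d \<le> real (path_len p)" by simp
  qed
  then have "(\<Sum>p\<leftarrow>ps. real d) \<le> (\<Sum>p\<leftarrow>ps. real (path_len p))"
    by (intro sum_list_mono) auto
  then have "real w * real d \<le> (\<Sum>p\<leftarrow>ps. real (path_len p))"
    using len by (simp add: sum_list_triv)
  then show "ereal (real d) \<le> ereal ((\<Sum>p\<leftarrow>ps. real (path_len p)) / real w)"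
    using assms(2) by (simp add: field_simps)
qed

lemma term_ge:
  assumes "i \<notin> reach E d" "k \<ge> 2"
  shows "ereal (real d) \<le> Inf {ereal (real w / real (w - k + 1)) * ell E w i | w. w \<ge> k}"
proof (rule Inf_greatest, clarify)
  fix w assume w: "k \<le> w"
  have e: "ereal (real d) \<le> ell E w i" using ell_ge[OF assms(1)] w assms(2) by auto
  have f: "1 \<le> real w / real (w - k + 1)" using w assms(2) by (simp add: field_simps)
  have "1 * ell E w i \<le> ereal (real w / real (w - k + 1)) * ell E w i"
  proof (rule ereal_mult_right_mono)
    show "1 \<le> ereal (real w / real (w - k + 1))" using f by simp
    have "0 \<le> ereal (real d)" by simp
    then show "0 \<le> ell E w i" using e by (rule order_trans)
  qed
  then show "ereal (real d) \<le> ereal (real w / real (w - k + 1)) * ell E w i" using e by simp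
qed

lemma gamma_ge:
  assumes g: "is_digraph n E" and k: "k \<ge> 2" and d: "d \<ge> 1"
  shows "ereal (real d * (real n - real (card (reach E d)))) \<le> Gamma_sota k n E"
proof -
  let ?N = "dealer_nbrs n E"
  let ?S = "{1..n} - ?N"
  let ?T = "\<lambda>i. Inf {ereal (real w / real (w - k + 1)) * ell E w i | w. w \<ge> k}"
  let ?g = "\<lambda>i. if i \<in> reach E d then 0 else real d"
  have Nsub: "?N \<subseteq> reach E d"
  proof
    fix v assume "v \<in> ?N"
    then have "v \<in> reach E 1" unfolding dealer_nbrs_def dealer_def by auto
    then show "v \<in> reach E d" using reach_mono[OF d] by blast
  qed
  have Tg: "ereal (?g i) \<le> ?T i" if "i \<in> ?S" for i
  proof (cases "i \<in> reach E d")
    case True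
    have "i \<notin> reach E 0" using that by auto
    from term_ge[OF this k] True show ?thesis by simp
  next
    case False
    from term_ge[OF this k] False show ?thesis by simp
  qed
  have s1: "(\<Sum>i\<in>?S. ereal (?g i)) \<le> (\<Sum>i\<in>?S. ?T i)" by (rule sum_mono) (rule Tg)
  have s2: "(\<Sum>i\<in>?S. ereal (?g i)) = ereal (\<Sum>i\<in>?S. ?g i)" by simp
  have s3: "(\<Sum>i\<in>?S. ?g i) = real d * real (card ({1..n} - reach E d))"
  proof -
    have "(\<Sum>i\<in>?S. ?g i) = (\<Sum>i\<in>?S - reach E d. real d)"
      by (rule sum.mono_neutral_cong_right) auto
    also have "?S - reach E d = {1..n} - reach E d" using Nsub by auto
    finally show ?thesis by simp
  qed
  have s4: "real n - real (card (reach E d)) \<le> real (card ({1..n} - reach E d))"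
  proof -
    have fin: "finite (reach E d)" using reach_sub[OF g] finite_subset by blast
    have "card {1..n} - card (reach E d) \<le> card ({1..n} - reach E d)"
      by (rule diff_card_le_card_Diff[OF fin])
    then have "real (card {1..n} - card (reach E d)) \<le> real (card ({1..n} - reach E d))" by linarith
    moreover have "real n - real (card (reach E d)) \<le> real (card {1..n} - card (reach E d))" by simp
    ultimately show ?thesis by linarith
  qed
  have "real d * (real n - real (card (reach E d))) \<le> real d * real (card ({1..n} - reach E d))"
    using s4 by (intro mult_left_mono) auto
  then have "ereal (real d * (real n - real (card (reach E d)))) \<le> (\<Sum>i\<in>?S. ereal (?g i))"
    unfolding s2 s3 by simp
  also have "\<dots> \<le> (\<Sum>i\<in>?S. ?T i)" by (rule s1)
  also have "\<dots> \<le> ereal (real (card ?N)) + (\<Sum>i\<in>?S. ?T i)"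
    by (simp add: add_increasing)
  finally show ?thesis unfolding Gamma_sota_def .
qed

theorem mainTheorem8:
  fixes G :: "nat \<Rightarrow> (nat \<times> nat) set" and k :: nat and \<epsilon> :: real
  assumes "k \<ge> 2"
    and "\<And>n. is_digraph n (G n)"
    and "\<And>n i. i \<in> {1..n} \<Longrightarrow> (dealer, i) \<in> (G n)\<^sup>*"
    and "\<epsilon> > 0"
    and "(\<lambda>n. real (max_out_deg n (G n))) \<in> O(\<lambda>n. ln (real n) powr (1/2 - \<epsilon>))"
  shows "((\<lambda>n. Gamma_sota k n (G n) / ereal (real n)) \<longlongrightarrow> \<infinity>) at_top"
proof -
  obtain c where c: "c > 0"
    and ev: "eventually (\<lambda>n. norm (real (max_out_deg n (G n))) \<le> c * norm (ln (real n) powr (1/2 - \<epsilon>))) at_top"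
    using assms(5) by (rule landau_o.bigE)
  show ?thesis unfolding tendsto_PInfty
  proof
    fix r :: real
    define d where "d = nat \<lceil>2 * r\<rceil> + 1"
    have d1: "d \<ge> 1" unfolding d_def by simp
    have dr: "r < real d / 2" unfolding d_def
      using of_nat_ceiling[of "2*r"] by simp
    have ev2: "eventually (\<lambda>n::nat. (c * ln (real n) + 1)^d \<le> real n/2) at_top"
      using c by real_asymp
    have ev3: "eventually (\<lambda>n::nat. n \<ge> 3) at_top" by (rule eventually_ge_at_top)
    show "eventually (\<lambda>n. ereal r < Gamma_sota k n (G n) / ereal (real n)) at_top"
      using ev ev2 ev3
    proof eventually_elim
      case (elim n)
      let ?b = "max_out_deg n (G n)"
      have ln1: "1 \<le> ln (real n)"
      proof -
        have "exp 1 \<le> (3::real)" using exp_le by linarith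
        also have "\<dots> \<le> real n" using elim(3) by simp
        finally show ?thesis using elim(3) by (subst ln_ge_iff) auto
      qed
      have "ln (real n) powr (1/2 - \<epsilon>) \<le> ln (real n) powr 1"
        using ln1 assms(4) by (intro powr_mono) auto
      then have pw: "ln (real n) powr (1/2 - \<epsilon>) \<le> ln (real n)" using ln1 by simp
      have "norm (ln (real n) powr (1/2 - \<epsilon>)) = ln (real n) powr (1/2 - \<epsilon>)"
        by simp
      then have "real ?b \<le> c * ln (real n) powr (1/2 - \<epsilon>)" using elim(1) by simp
      also have "\<dots> \<le> c * ln (real n)" using pw c by (intro mult_left_mono) auto
      finally have "real ?b \<le> c * ln (real n)" .
      then have "real ?b + 1 \<le> c * ln (real n) + 1" by simp
      then have "(real ?b + 1) ^ d \<le> (c * ln (real n) + 1) ^ d"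
        by (intro power_mono) auto
      moreover have "real (card (reach (G n) d)) \<le> (real ?b + 1) ^ d"
      proof -
        have "card (reach (G n) d) \<le> (?b + 1) ^ d" by (rule reach_card[OF assms(2)])
        then have "real (card (reach (G n) d)) \<le> real ((?b + 1) ^ d)" by (simp only: of_nat_le_iff)
        then show ?thesis by (simp add: add.commute)
      qed
      ultimately have cr: "real (card (reach (G n) d)) \<le> real n / 2" using elim(2) by linarith
      have "real d * (real n / 2) \<le> real d * (real n - real (card (reach (G n) d)))"
        using cr by (intro mult_left_mono) auto
      moreover have "real n * (real d / 2) = real d * (real n / 2)" by simp
      ultimately have "ereal (real n * (real d / 2)) \<le> ereal (real d * (real n - real (card (reach (G n) d))))"
        by (simp only: ereal_less_eq(3))
      then have ge: "ereal (real n * (real d / 2)) \<le> Gamma_sota k n (G n)"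
        using gamma_ge[OF assms(2) assms(1) d1, of n] by (rule order_trans)
      have np: "0 < real n" using elim(3) by simp
      have "ereal (real d / 2) \<le> Gamma_sota k n (G n) / ereal (real n)"
        using ge np by (subst ereal_le_divide_pos) auto
      then show ?case using dr by (meson ereal_less_eq(3) le_less_trans not_le)
    qed
  qed
qed

end
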